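(* Let $I\subset S=K[x_1,\dots,x_t]$ be an $\mathfrak m$-primary monomial ideal with $x_i^{a_i}\in\mathscr G(I)$, $a_i\in\mathbb Z_{>0}$, for $i=1,\dots,t$. Then $I=\langle x_1^{a_1},\dots,x_t^{a_t}\rangle$ if and only if $v(I)=\sum_{i=1}^t a_i-t$.
   Context: $K$ is a field, $S$ is standard graded and $\mathfrak m=\langle x_1,\dots,x_t\rangle$. For a proper graded ideal $I$, the $v$-number is $v(I)=\min\{k\ge 0 : \exists f\in S_k,\ \mathcal P\in\operatorname{Ass}(S/I) \text{ with } (I:f)=\mathcal P\}$. $\mathscr G(I)$ is the minimal monomial generating set of the monomial ideal $I$. *)

theory Defs
  imports Main "HOL-Library.Poly_Mapping"
begin

text \<open>The ring
S = K[x_1,...,x_t] is modelled by the polynomials whose monomials only involve the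
variables with index < t (variable x_{i+1} of the paper is index i).\<close>

type_synonym monom = "nat \<Rightarrow>\<^sub>0 nat"
type_synonym 'k mpoly = "monom \<Rightarrow>\<^sub>0 'k"

definition polyring :: "nat \<Rightarrow> 'k::field mpoly set" where
  "polyring t = {p. \<forall>m \<in> Poly_Mapping.keys p. Poly_Mapping.keys m \<subseteq> {..<t}}"

definition tdeg :: "monom \<Rightarrow> nat" where
  "tdeg m = (\<Sum>i\<in>Poly_Mapping.keys m. Poly_Mapping.lookup m i)"

definition homog :: "nat \<Rightarrow> nat \<Rightarrow> 'k::field mpoly set" where
  "homog t k = {p \<in> polyring t. \<forall>m \<in> Poly_Mapping.keys p. tdeg m = k}"

definition monomial :: "monom \<Rightarrow> 'k::field mpoly" where
  "monomial m = Poly_Mapping.single m 1"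

definition varpow :: "nat \<Rightarrow> nat \<Rightarrow> 'k::field mpoly" where
  "varpow i a = monomial (Poly_Mapping.single i a)"

definition is_ideal :: "nat \<Rightarrow> 'k::field mpoly set \<Rightarrow> bool" where
  "is_ideal t I \<longleftrightarrow> I \<subseteq> polyring t \<and> 0 \<in> I \<and>
     (\<forall>f\<in>I. \<forall>g\<in>I. f + g \<in> I) \<and> (\<forall>f\<in>I. \<forall>g\<in>polyring t. g * f \<in> I)"

definition ideal_gen :: "nat \<Rightarrow> 'k::field mpoly set \<Rightarrow> 'k mpoly set" where
  "ideal_gen t G = \<Inter> {I. is_ideal t I \<and> G \<subseteq> I}"

definition proper_ideal :: "nat \<Rightarrow> 'k::field mpoly set \<Rightarrow> bool" where
  "proper_ideal t I \<longleftrightarrow> is_ideal t I \<and> I \<noteq> polyring t"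

definition graded_ideal :: "nat \<Rightarrow> 'k::field mpoly set \<Rightarrow> bool" where
  "graded_ideal t I \<longleftrightarrow> (\<exists>G. (\<forall>g\<in>G. \<exists>k. g \<in> homog t k) \<and> I = ideal_gen t G)"

definition prime_ideal :: "nat \<Rightarrow> 'k::field mpoly set \<Rightarrow> bool" where
  "prime_ideal t P \<longleftrightarrow> proper_ideal t P \<and>
     (\<forall>a\<in>polyring t. \<forall>b\<in>polyring t. a * b \<in> P \<longrightarrow> a \<in> P \<or> b \<in> P)"

definition radical :: "nat \<Rightarrow> 'k::field mpoly set \<Rightarrow> 'k mpoly set" where
  "radical t I = {f \<in> polyring t. \<exists>n. f ^ n \<in> I}"

definition primary_ideal :: "nat \<Rightarrow> 'k::field mpoly set \<Rightarrow> bool" where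
  "primary_ideal t Q \<longleftrightarrow> proper_ideal t Q \<and>
     (\<forall>a\<in>polyring t. \<forall>b\<in>polyring t. a * b \<in> Q \<longrightarrow> a \<in> Q \<or> b \<in> radical t Q)"

definition maxid :: "nat \<Rightarrow> 'k::field mpoly set" where
  "maxid t = ideal_gen t {varpow i 1 | i. i < t}"

definition m_primary :: "nat \<Rightarrow> 'k::field mpoly set \<Rightarrow> bool" where
  "m_primary t I \<longleftrightarrow> primary_ideal t I \<and> radical t I = maxid t"

definition colon :: "nat \<Rightarrow> 'k::field mpoly set \<Rightarrow> 'k mpoly \<Rightarrow> 'k mpoly set" where
  "colon t I f = {g \<in> polyring t. g * f \<in> I}"

definition Ass :: "nat \<Rightarrow> 'k::field mpoly set \<Rightarrow> 'k mpoly set set" where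
  "Ass t I = {P. prime_ideal t P \<and> (\<exists>f\<in>polyring t. colon t I f = P)}"

definition v_number :: "nat \<Rightarrow> 'k::field mpoly set \<Rightarrow> nat" where
  "v_number t I = (LEAST k. \<exists>f \<in> homog t k. \<exists>P \<in> Ass t I. colon t I f = P)"

definition is_monom :: "nat \<Rightarrow> 'k::field mpoly \<Rightarrow> bool" where
  "is_monom t u \<longleftrightarrow> (\<exists>m. Poly_Mapping.keys m \<subseteq> {..<t} \<and> u = monomial m)"

definition monomial_ideal :: "nat \<Rightarrow> 'k::field mpoly set \<Rightarrow> bool" where
  "monomial_ideal t I \<longleftrightarrow> (\<exists>G. (\<forall>g\<in>G. is_monom t g) \<and> I = ideal_gen t G)"

definition mingens :: "nat \<Rightarrow> 'k::field mpoly set \<Rightarrow> 'k mpoly set" where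
  "mingens t I = {u \<in> I. is_monom t u \<and>
      (\<forall>w\<in>I. is_monom t w \<longrightarrow> w dvd u \<longrightarrow> w = u)}"

end

theory Submission
  imports Defs
begin
lemma monom_add_eq_0: "((a::monom) + b = 0) = (a = 0 \<and> b = 0)"
proof
  assume h: "a + b = 0"
  have "\<And>i. Poly_Mapping.lookup (a+b) i = 0" using h by simp
  hence "\<And>i. Poly_Mapping.lookup a i = 0 \<and> Poly_Mapping.lookup b i = 0" by (simp add: lookup_add)
  thus "a = 0 \<and> b = 0" by (auto intro!: poly_mapping_eqI)
qed simp

lemma lookup_mult_0: "Poly_Mapping.lookup (f * g :: 'k::field mpoly) 0 = Poly_Mapping.lookup f 0 * Poly_Mapping.lookup g 0"
proof -
  have e: "\<And>a aa::monom. (a + aa = 0) = (a = 0 \<and> aa = 0)"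
    using monom_add_eq_0 by blast
  show ?thesis by (simp add: lookup_mult e when_when[symmetric] mult_when)
qed

lemma lookup_mult_single: "Poly_Mapping.lookup (g * Poly_Mapping.single w c :: 'k::field mpoly) (m + w) = Poly_Mapping.lookup g m * c"
proof -
  have "\<And>a. (\<Sum>aa. (c when w = aa) when m + w = a + aa) = (c when a = m)"
  proof -
    fix a
    have "(\<Sum>aa. (c when w = aa) when m + w = a + aa) = (\<Sum>aa. (c when m + w = a + w) when w = aa)"
      by (rule Sum_any.cong) (auto simp: when_def)
    also have "\<dots> = (c when a = m)" by (auto simp: when_def)
    finally show "?thesis a" .
  qed
  then show ?thesis by (simp add: lookup_mult lookup_single mult_when)
qed

lemma keys_monom_add: "Poly_Mapping.keys ((m::monom) + d) = Poly_Mapping.keys m \<union> Poly_Mapping.keys d"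
  by (auto simp: in_keys_iff lookup_add)

lemma keys_mult_monomial:
  "Poly_Mapping.keys (g * monomial w :: 'k::field mpoly) = (\<lambda>m. m + w) ` Poly_Mapping.keys g"
proof
  show "Poly_Mapping.keys (g * monomial w) \<subseteq> (\<lambda>m. m + w) ` Poly_Mapping.keys g"
    using keys_mult[of g "monomial w"] by (auto simp: monomial_def)
  show "(\<lambda>m. m + w) ` Poly_Mapping.keys g \<subseteq> Poly_Mapping.keys (g * monomial w)"
    by (auto simp: monomial_def in_keys_iff lookup_mult_single)
qed

lemma polyring_mult:
  assumes "p \<in> polyring t" "q \<in> polyring t" shows "p * q \<in> polyring t"
  using assms keys_mult[of p q] unfolding polyring_def
  by (force simp: keys_monom_add)

lemma polyring_add:
  assumes "p \<in> polyring t" "q \<in> polyring t" shows "p + q \<in> polyring t"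
  using assms keys_add[of p q] unfolding polyring_def by blast

lemma single_polyring: "Poly_Mapping.keys m \<subseteq> {..<t} \<Longrightarrow> Poly_Mapping.single m c \<in> polyring t"
  unfolding polyring_def by auto

lemma monomial_polyring: "Poly_Mapping.keys m \<subseteq> {..<t} \<Longrightarrow> monomial m \<in> polyring t"
  unfolding monomial_def by (rule single_polyring)

lemma keys_monomial[simp]: "Poly_Mapping.keys (monomial m :: 'k::field mpoly) = {m}"
  by (simp add: monomial_def)

lemma one_polyring: "1 \<in> polyring t"
  unfolding polyring_def by simp

definition inG :: "'k::field mpoly set \<Rightarrow> monom \<Rightarrow> bool" where
  "inG G m \<longleftrightarrow> (\<exists>m' d. monomial m' \<in> G \<and> m = m' + d)"

lemma inG_mono: "inG G m \<Longrightarrow> inG G (m + d)"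
  unfolding inG_def by (metis add.assoc)

lemma ideal_sum:
  assumes "is_ideal t I" "finite A" "\<forall>x\<in>A. f x \<in> I"
  shows "sum f A \<in> I"
  using assms(2,3)
proof (induction A rule: finite_induct)
  case empty then show ?case using assms(1) by (simp add: is_ideal_def)
next
  case (insert x F) then show ?case using assms(1) by (simp add: is_ideal_def)
qed

lemma poly_expand: "p = (\<Sum>m\<in>Poly_Mapping.keys p. Poly_Mapping.single m (Poly_Mapping.lookup p m))"
proof (rule poly_mapping_eqI)
  fix k
  show "Poly_Mapping.lookup p k = Poly_Mapping.lookup (\<Sum>m\<in>Poly_Mapping.keys p. Poly_Mapping.single m (Poly_Mapping.lookup p m)) k"
    by (cases "k \<in> Poly_Mapping.keys p")
       (auto simp: lookup_sum lookup_single when_def in_keys_iff)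
qed

lemma S_ideal:
  fixes G :: "'k::field mpoly set"
  shows "is_ideal t {p \<in> (polyring t :: 'k mpoly set). \<forall>m\<in>Poly_Mapping.keys p. inG G m}"
proof -
  define S :: "'k mpoly set" where "S = {p \<in> polyring t. \<forall>m\<in>Poly_Mapping.keys p. inG G m}"
  have a: "f + g \<in> S" if f: "f \<in> S" and g: "g \<in> S" for f g
    using f g keys_add[of f g] polyring_add[of f t g] by (auto simp: S_def)
  have b: "g * f \<in> S" if f: "f \<in> S" and g: "g \<in> polyring t" for f g
  proof -
    have "g * f \<in> polyring t" using f g polyring_mult by (auto simp: S_def)
    moreover have "\<forall>m\<in>Poly_Mapping.keys (g * f). inG G m"
    proof
      fix m assume "m \<in> Poly_Mapping.keys (g * f)"
      then obtain a b where "m = a + b" "b \<in> Poly_Mapping.keys f" using keys_mult by blast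
      then show "inG G m" using f inG_mono[of G b a] by (auto simp: add.commute S_def)
    qed
    ultimately show "g * f \<in> S" by (simp add: S_def)
  qed
  have "S \<subseteq> polyring t" "0 \<in> S" by (auto simp: S_def polyring_def)
  then have "is_ideal t S" unfolding is_ideal_def using a b by blast
  then show ?thesis by (simp add: S_def)
qed

lemma ideal_gen_char:
  fixes G :: "'k::field mpoly set"
  assumes G: "\<forall>g\<in>G. is_monom t g"
  shows "ideal_gen t G = {p \<in> polyring t. \<forall>m\<in>Poly_Mapping.keys p. inG G m}"
proof -
  define S :: "'k mpoly set" where "S = {p \<in> polyring t. \<forall>m\<in>Poly_Mapping.keys p. inG G m}"
  have idS: "is_ideal t S" unfolding S_def by (rule S_ideal)
  have GS: "G \<subseteq> S"
  proof
    fix g assume "g \<in> G"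
    then obtain m where m: "Poly_Mapping.keys m \<subseteq> {..<t}" "g = monomial m"
      using G by (auto simp: is_monom_def)
    then have "inG G m" using \<open>g \<in> G\<close> unfolding inG_def by (metis add_0_right)
    then show "g \<in> S" using m by (simp add: S_def monomial_polyring)
  qed
  have "ideal_gen t G \<subseteq> S" unfolding ideal_gen_def using idS GS by blast
  moreover have "S \<subseteq> ideal_gen t G"
  proof
    fix p assume p: "p \<in> S"
    show "p \<in> ideal_gen t G" unfolding ideal_gen_def
    proof (intro InterI, clarify)
      fix J assume J: "is_ideal t J" "G \<subseteq> J"
      have "\<forall>m\<in>Poly_Mapping.keys p. Poly_Mapping.single m (Poly_Mapping.lookup p m) \<in> J"
      proof
        fix m assume mk: "m \<in> Poly_Mapping.keys p"
        then have mt: "Poly_Mapping.keys m \<subseteq> {..<t}" using p by (auto simp: S_def polyring_def)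
        obtain m' d where md: "monomial m' \<in> G" "m = m' + d"
          using p mk by (auto simp: S_def inG_def)
        have dt: "Poly_Mapping.keys d \<subseteq> {..<t}" using mt md by (simp add: keys_monom_add)
        have "Poly_Mapping.single m (Poly_Mapping.lookup p m) = Poly_Mapping.single d (Poly_Mapping.lookup p m) * monomial m'"
          by (simp add: monomial_def mult_single md add.commute)
        moreover have "Poly_Mapping.single d (Poly_Mapping.lookup p m) \<in> polyring t"
          using dt by (rule single_polyring)
        ultimately show "Poly_Mapping.single m (Poly_Mapping.lookup p m) \<in> J"
          using J md unfolding is_ideal_def by auto
      qed
      then have "(\<Sum>m\<in>Poly_Mapping.keys p. Poly_Mapping.single m (Poly_Mapping.lookup p m)) \<in> J"
        by (intro ideal_sum[OF J(1)]) auto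
      then show "p \<in> J" using poly_expand[of p] by simp
    qed
  qed
  ultimately show ?thesis by (simp add: S_def)
qed

lemma ideal_gen_is_ideal:
  fixes G :: "'k::field mpoly set"
  assumes G: "\<forall>g\<in>G. is_monom t g"
  shows "is_ideal t (ideal_gen t G)"
  using ideal_gen_char[OF G] S_ideal[of t G] by simp

lemma split_monom:
  assumes "k \<le> Poly_Mapping.lookup (m::monom) i"
  shows "m = Poly_Mapping.single i k + (m - Poly_Mapping.single i k)"
  using assms by (intro poly_mapping_eqI) (auto simp: lookup_add lookup_minus lookup_single when_def)

lemma varpow_monom: "0 < k \<Longrightarrow> i < t \<Longrightarrow> is_monom t (varpow i k :: 'k::field mpoly)"
  unfolding is_monom_def varpow_def
  by (rule exI[of _ "Poly_Mapping.single i k"]) auto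

lemma pp_monoms:
  assumes "\<forall>i<t. 0 < a i"
  shows "\<forall>g\<in>{varpow i (a i) :: 'k::field mpoly | i. i < t}. is_monom t g"
  using assms varpow_monom by blast

lemma monomial_inj: "(monomial m :: 'k::field mpoly) = monomial m' \<Longrightarrow> m = m'"
  unfolding monomial_def by (metis keys_single one_neq_zero singletonD singletonI)

lemma inG_pp:
  assumes "\<forall>i<t. 0 < a i"
  shows "inG {varpow i (a i) :: 'k::field mpoly | i. i < t} m \<longleftrightarrow> (\<exists>i<t. a i \<le> Poly_Mapping.lookup m i)"
proof
  assume "inG {varpow i (a i) :: 'k::field mpoly | i. i < t} m"
  then obtain m' d i where "i < t" "monomial m' = (varpow i (a i) :: 'k mpoly)" "m = m' + d"
    unfolding inG_def by blast
  then have "m' = Poly_Mapping.single i (a i)" "m = m' + d"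
    unfolding varpow_def using monomial_inj by blast+
  then show "\<exists>i<t. a i \<le> Poly_Mapping.lookup m i" using \<open>i < t\<close> by (auto simp: lookup_add)
next
  assume "\<exists>i<t. a i \<le> Poly_Mapping.lookup m i"
  then obtain i where i: "i < t" "a i \<le> Poly_Mapping.lookup m i" by blast
  then show "inG {varpow i (a i) :: 'k::field mpoly | i. i < t} m"
    unfolding inG_def varpow_def using split_monom[OF i(2)] by blast
qed

lemma pp_mem:
  assumes "\<forall>i<t. 0 < a i"
  shows "p \<in> ideal_gen t {varpow i (a i) :: 'k::field mpoly | i. i < t} \<longleftrightarrow>
     p \<in> polyring t \<and> (\<forall>m\<in>Poly_Mapping.keys p. \<exists>i<t. a i \<le> Poly_Mapping.lookup m i)"
  using ideal_gen_char[OF pp_monoms[OF assms]] inG_pp[OF assms] by auto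

lemma nonzero_monom:
  assumes "Poly_Mapping.keys (m::monom) \<subseteq> {..<t}"
  shows "(\<exists>i<t. 1 \<le> Poly_Mapping.lookup m i) \<longleftrightarrow> m \<noteq> 0"
proof
  assume "\<exists>i<t. 1 \<le> Poly_Mapping.lookup m i" then show "m \<noteq> 0" by auto
next
  assume "m \<noteq> 0"
  then obtain i where "i \<in> Poly_Mapping.keys m" by (metis keys_eq_empty equals0I)
  then show "\<exists>i<t. 1 \<le> Poly_Mapping.lookup m i" using assms
    by (metis One_nat_def Suc_leI in_keys_iff lessThan_iff neq0_conv subsetD)
qed

lemma maxid_char: "maxid t = {p \<in> (polyring t :: 'k::field mpoly set). Poly_Mapping.lookup p 0 = 0}"
proof -
  have "maxid t = ideal_gen t {varpow i ((\<lambda>_. 1::nat) i) :: 'k mpoly | i. i < t}"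
    by (simp add: maxid_def)
  moreover have "p \<in> ideal_gen t {varpow i ((\<lambda>_. 1::nat) i) :: 'k mpoly | i. i < t} \<longleftrightarrow>
      p \<in> polyring t \<and> Poly_Mapping.lookup p 0 = 0" for p
  proof -
    have "p \<in> ideal_gen t {varpow i ((\<lambda>_. 1::nat) i) :: 'k mpoly | i. i < t} \<longleftrightarrow>
      p \<in> polyring t \<and> (\<forall>m\<in>Poly_Mapping.keys p. \<exists>i<t. 1 \<le> Poly_Mapping.lookup m i)"
      using pp_mem[of t "\<lambda>_. 1"] by simp
    also have "\<dots> \<longleftrightarrow> p \<in> polyring t \<and> (\<forall>m\<in>Poly_Mapping.keys p. m \<noteq> 0)"
      using nonzero_monom by (auto simp: polyring_def)
    also have "\<dots> \<longleftrightarrow> p \<in> polyring t \<and> Poly_Mapping.lookup p 0 = 0"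
      by (auto simp: in_keys_iff)
    finally show ?thesis .
  qed
  ultimately show ?thesis by auto
qed

lemma maxid_is_ideal: "is_ideal t (maxid t :: 'k::field mpoly set)"
  unfolding maxid_def using ideal_gen_is_ideal[OF pp_monoms[of t "\<lambda>_. 1"]] by simp

lemma maxid_prime: "prime_ideal t (maxid t :: 'k::field mpoly set)"
  unfolding prime_ideal_def proper_ideal_def
proof (intro conjI ballI impI)
  show "is_ideal t (maxid t :: 'k mpoly set)" by (rule maxid_is_ideal)
  show "maxid t \<noteq> (polyring t :: 'k mpoly set)"
    using one_polyring[of t] by (metis (mono_tags, lifting) lookup_one_zero maxid_char mem_Collect_eq one_neq_zero)
  fix a b :: "'k mpoly" assume "a \<in> polyring t" "b \<in> polyring t" "a * b \<in> maxid t"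
  then show "a \<in> maxid t \<or> b \<in> maxid t" by (auto simp: maxid_char lookup_mult_0)
qed

lemma colon_maxid:
  fixes G :: "'k::field mpoly set"
  assumes G: "\<forall>g\<in>G. is_monom t g"
    and w: "Poly_Mapping.keys w \<subseteq> {..<t}" "\<not> inG G w"
    and wi: "\<forall>i<t. inG G (w + Poly_Mapping.single i 1)"
  shows "colon t (ideal_gen t G) (monomial w) = maxid t"
proof -
  have "g * monomial w \<in> ideal_gen t G \<longleftrightarrow> Poly_Mapping.lookup g 0 = 0" if g: "g \<in> polyring t" for g
  proof -
    have gm: "g * monomial w \<in> polyring t" using g w polyring_mult monomial_polyring by blast
    have key: "inG G (m + w) \<longleftrightarrow> m \<noteq> 0" if m: "m \<in> Poly_Mapping.keys g" for m
    proof
      assume "inG G (m + w)" then show "m \<noteq> 0" using w by auto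
    next
      assume "m \<noteq> 0"
      moreover have "Poly_Mapping.keys m \<subseteq> {..<t}" using g m by (auto simp: polyring_def)
      ultimately obtain i where i: "i < t" "1 \<le> Poly_Mapping.lookup m i" using nonzero_monom by blast
      have "m + w = (w + Poly_Mapping.single i 1) + (m - Poly_Mapping.single i 1)"
        using split_monom[OF i(2)] by (metis add.commute add.assoc)
      then show "inG G (m + w)" using wi i inG_mono by metis
    qed
    have "g * monomial w \<in> ideal_gen t G \<longleftrightarrow> (\<forall>m\<in>Poly_Mapping.keys g. inG G (m + w))"
      using gm by (simp add: ideal_gen_char[OF G] keys_mult_monomial)
    also have "\<dots> \<longleftrightarrow> (\<forall>m\<in>Poly_Mapping.keys g. m \<noteq> 0)" using key by auto
    also have "\<dots> \<longleftrightarrow> Poly_Mapping.lookup g 0 = 0" by (auto simp: in_keys_iff)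
    finally show ?thesis .
  qed
  then show ?thesis unfolding colon_def maxid_char by auto
qed

lemma tdeg_sum:
  assumes "Poly_Mapping.keys m \<subseteq> {..<t}"
  shows "tdeg m = (\<Sum>i<t. Poly_Mapping.lookup m i)"
  unfolding tdeg_def using assms
  by (intro sum.mono_neutral_left) (auto simp: in_keys_iff)

lemma ideal_one:
  assumes "is_ideal t P" "1 \<in> P" shows "P = polyring t"
  using assms unfolding is_ideal_def by (metis mult.right_neutral subsetI subset_antisym)

lemma prime_pow:
  assumes P: "prime_ideal t P" and i: "i < t"
  shows "monomial (Poly_Mapping.single i n) \<in> P \<Longrightarrow> monomial (Poly_Mapping.single i 1) \<in> P"
proof (induction n)
  case 0
  then have "1 \<in> P" by (simp add: monomial_def)
  then show ?case using P ideal_one unfolding prime_ideal_def proper_ideal_def by blast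
next
  case (Suc n)
  have eq: "monomial (Poly_Mapping.single i (Suc n)) = monomial (Poly_Mapping.single i 1) * (monomial (Poly_Mapping.single i n) :: 'a mpoly)"
    by (simp add: monomial_def mult_single flip: single_add)
  have "monomial (Poly_Mapping.single i 1) \<in> polyring t" "monomial (Poly_Mapping.single i n) \<in> (polyring t :: 'a mpoly set)"
    using i by (auto intro!: monomial_polyring split: if_splits)
  then show ?case using P Suc eq unfolding prime_ideal_def by metis
qed

lemma lower_bound:
  fixes f :: "'k::field mpoly"
  assumes apos: "\<forall>i<t. 0 < a i"
    and f: "f \<in> homog t k" and k: "k < (\<Sum>i<t. a i - 1)"
    and P: "P \<in> Ass t (ideal_gen t {varpow i (a i) :: 'k mpoly | i. i < t})"
    and cf: "colon t (ideal_gen t {varpow i (a i) :: 'k mpoly | i. i < t}) f = P"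
  shows False
proof -
  define J where "J = ideal_gen t {varpow i (a i) :: 'k mpoly | i. i < t}"
  have Jid: "is_ideal t J" unfolding J_def by (rule ideal_gen_is_ideal[OF pp_monoms[OF apos]])
  have Pp: "prime_ideal t P" using P by (simp add: Ass_def)
  have fp: "f \<in> polyring t" using f by (simp add: homog_def)
  have cfJ: "colon t J f = P" using cf by (simp add: J_def)
  show False
  proof (cases "f \<in> J")
    case True
    then have "colon t J f = polyring t" using Jid unfolding colon_def is_ideal_def by auto
    then show False using cfJ Pp unfolding prime_ideal_def proper_ideal_def by auto
  next
    case False
    then obtain c where c: "c \<in> Poly_Mapping.keys f" "\<forall>i<t. Poly_Mapping.lookup c i < a i"
      using fp pp_mem[OF apos, of f] unfolding J_def by (auto simp: not_le)
    have ct: "Poly_Mapping.keys c \<subseteq> {..<t}" using fp c(1) by (auto simp: polyring_def)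
    have tc: "tdeg c = k" using f c(1) by (auto simp: homog_def)
    obtain i where i: "i < t" "Poly_Mapping.lookup c i + 1 < a i"
    proof (rule ccontr)
      assume "\<not> thesis"
      then have "\<forall>i<t. Poly_Mapping.lookup c i = a i - 1" using c(2) that by fastforce
      then have "tdeg c = (\<Sum>i<t. a i - 1)" using tdeg_sum[OF ct] by simp
      then show False using tc k by simp
    qed
    define x :: "'k mpoly" where "x = monomial (Poly_Mapping.single i 1)"
    define y :: "'k mpoly" where "y = monomial (Poly_Mapping.single i (a i))"
    have xp: "x \<in> polyring t" "y \<in> polyring t"
      unfolding x_def y_def using i(1) by (auto intro!: monomial_polyring split: if_splits)
    have "x * f \<notin> J"
    proof
      assume "x * f \<in> J"
      then have "f * x \<in> J" by (simp add: mult.commute)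
      moreover have "c + Poly_Mapping.single i 1 \<in> Poly_Mapping.keys (f * x)"
        using c(1) by (simp add: x_def keys_mult_monomial)
      ultimately obtain j where "j < t" "a j \<le> Poly_Mapping.lookup (c + Poly_Mapping.single i 1) j"
        using pp_mem[OF apos] unfolding J_def by blast
      then show False using c(2) i by (auto simp: lookup_add lookup_single when_def split: if_splits)
    qed
    then have "x \<notin> P" using cfJ by (auto simp: colon_def)
    moreover have "y \<in> P"
    proof -
      have "f * y \<in> polyring t" using fp xp polyring_mult by blast
      moreover have "\<forall>m\<in>Poly_Mapping.keys (f * y). \<exists>j<t. a j \<le> Poly_Mapping.lookup m j"
        using i(1) by (auto simp: y_def keys_mult_monomial lookup_add)
      ultimately have "f * y \<in> J" using pp_mem[OF apos] unfolding J_def by blast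
      then show ?thesis using cfJ xp by (auto simp: colon_def mult.commute)
    qed
    ultimately show False using prime_pow[OF Pp i(1)] unfolding x_def y_def by blast
  qed
qed

theorem corollary4p4:
  fixes t :: nat and I :: "'k::field mpoly set" and a :: "nat \<Rightarrow> nat"
  assumes "monomial_ideal t I"
    and "m_primary t I"
    and "\<forall>i<t. a i > 0"
    and "\<forall>i<t. (varpow i (a i) :: 'k mpoly) \<in> mingens t I"
  shows "I = ideal_gen t {varpow i (a i) | i. i < t}
         \<longleftrightarrow> int (v_number t I) = (\<Sum>i<t. int (a i)) - int t"
proof -
  have apos: "\<forall>i<t. 0 < a i" using assms(3) by blast
  obtain G where G: "\<forall>g\<in>G. is_monom t g" and IG: "I = ideal_gen t G"
    using assms(1) unfolding monomial_ideal_def by blast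
  have Iid: "is_ideal t I" using IG ideal_gen_is_ideal[OF G] by simp
  have Iprop: "I \<noteq> polyring t" using assms(2)
    unfolding m_primary_def primary_ideal_def proper_ideal_def by blast
  define Gp :: "'k mpoly set" where "Gp = {varpow i (a i) | i. i < t}"
  define J where "J = ideal_gen t Gp"
  define N where "N = (\<Sum>i<t. a i - 1)"
  have hN: "int N = (\<Sum>i<t. int (a i)) - int t"
  proof -
    have "int N = (\<Sum>i<t. int (a i) - 1)" unfolding N_def of_nat_sum
      using apos by (intro sum.cong) auto
    also have "\<dots> = (\<Sum>i<t. int (a i)) - int t" by (simp add: sum_subtractf)
    finally show ?thesis .
  qed
  define A :: monom where "A = Abs_poly_mapping (\<lambda>i. if i < t then a i - 1 else 0)"
  have lA: "Poly_Mapping.lookup A = (\<lambda>i. if i < t then a i - 1 else 0)"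
    unfolding A_def by (rule lookup_Abs_poly_mapping) (rule finite_subset[of _ "{..<t}"], auto)
  have At: "Poly_Mapping.keys A \<subseteq> {..<t}" by (auto simp: in_keys_iff lA split: if_splits)
  have tA: "tdeg A = N" unfolding N_def tdeg_sum[OF At] by (simp add: lA)
  have wit: "(monomial A :: 'k mpoly) \<in> homog t (tdeg w)" if "w = A" for w
    using that At by (simp add: homog_def monomial_polyring)
  have vJ: "v_number t J = N"
  proof -
    have nA: "\<not> inG Gp A"
    proof
      assume "inG Gp A"
      then obtain i where "i < t" "a i \<le> Poly_Mapping.lookup A i"
        using inG_pp[OF apos, where 'k='k, of A] unfolding Gp_def by blast
      then show False using apos by (auto simp: lA)
    qed
    have nAi: "\<forall>i<t. inG Gp (A + Poly_Mapping.single i 1)"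
    proof (intro allI impI)
      fix i assume i: "i < t"
      have "a i \<le> Poly_Mapping.lookup (A + Poly_Mapping.single i 1) i" using i apos by (simp add: lA lookup_add)
      then show "inG Gp (A + Poly_Mapping.single i 1)"
        using inG_pp[OF apos, where 'k='k] i unfolding Gp_def by blast
    qed
    have c: "colon t J (monomial A) = maxid t"
      unfolding J_def by (rule colon_maxid[OF _ At nA nAi]) (use pp_monoms[OF apos] in \<open>simp add: Gp_def\<close>)
    have mA: "maxid t \<in> Ass t J"
      unfolding Ass_def using maxid_prime c monomial_polyring[OF At] by blast
    show ?thesis unfolding v_number_def
    proof (rule Least_equality)
      show "\<exists>f\<in>homog t N. \<exists>P\<in>Ass t J. colon t J f = P"
      proof (rule bexI[of _ "monomial A"])
        show "(monomial A :: 'k mpoly) \<in> homog t N" using wit[of A] tA by simp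
        show "\<exists>P\<in>Ass t J. colon t J (monomial A) = P" using mA c by auto
      qed
      fix y assume "\<exists>f\<in>homog t y. \<exists>P\<in>Ass t J. colon t J f = P"
      then obtain f P where "f \<in> homog t y" "P \<in> Ass t J" "colon t J f = P" by blast
      then show "N \<le> y" using lower_bound[OF apos, of f y P] unfolding J_def Gp_def N_def
        by (meson not_le)
    qed
  qed
  have JI: "J \<subseteq> I"
  proof -
    have "Gp \<subseteq> I" using assms(4) unfolding Gp_def mingens_def by auto
    then show ?thesis unfolding J_def ideal_gen_def using Iid by blast
  qed
  show ?thesis
  proof
    assume "I = ideal_gen t {varpow i (a i) | i. i < t}"
    then have "I = J" by (simp add: J_def Gp_def)
    then show "int (v_number t I) = (\<Sum>i<t. int (a i)) - int t" using vJ hN by simp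
  next
    assume hv: "int (v_number t I) = (\<Sum>i<t. int (a i)) - int t"
    then have vI: "v_number t I = N" using hN by simp
    show "I = ideal_gen t {varpow i (a i) | i. i < t}"
    proof (rule ccontr)
      assume "I \<noteq> ideal_gen t {varpow i (a i) | i. i < t}"
      then have "I \<noteq> J" by (simp add: J_def Gp_def)
      then obtain p where p: "p \<in> I" "p \<notin> J" using JI by blast
      have pp: "p \<in> polyring t" using p Iid by (auto simp: is_ideal_def)
      obtain c where c: "c \<in> Poly_Mapping.keys p" "\<forall>i<t. Poly_Mapping.lookup c i < a i"
        using p pp pp_mem[OF apos, of p] unfolding J_def Gp_def by (auto simp: not_le)
      have ct: "Poly_Mapping.keys c \<subseteq> {..<t}" using pp c(1) by (auto simp: polyring_def)
      have Ichar: "I = {p \<in> polyring t. \<forall>m\<in>Poly_Mapping.keys p. inG G m}"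
        using IG ideal_gen_char[OF G] by simp
      have "inG G c" using c(1) p(1) Ichar by auto
      moreover have "A = c + (A - c)"
      proof (rule poly_mapping_eqI)
        fix i
        show "Poly_Mapping.lookup A i = Poly_Mapping.lookup (c + (A - c)) i"
        proof (cases "i < t")
          case True then show ?thesis using c(2) by (auto simp: lookup_add lookup_minus lA)
        next
          case False then have "Poly_Mapping.lookup c i = 0" using ct by (auto simp: in_keys_iff)
          then show ?thesis using False by (auto simp: lookup_add lookup_minus lA)
        qed
      qed
      ultimately have inA: "inG G A" by (metis inG_mono)
      have inS: "inG G (Poly_Mapping.single i (a i))" if "i < t" for i
      proof -
        have "varpow i (a i) \<in> I" using assms(4) that unfolding mingens_def by auto
        then show ?thesis using Ichar by (auto simp: varpow_def)
      qed
      have GI: "G \<subseteq> I" unfolding IG ideal_gen_def by blast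
      have n0: "\<not> inG G 0"
      proof
        assume "inG G 0"
        then obtain m' d where "monomial m' \<in> G" "0 = m' + d" unfolding inG_def by blast
        then have "m' = 0" using monom_add_eq_0 by metis
        then have "monomial 0 \<in> I" using GI \<open>monomial m' \<in> G\<close> by blast
        then have "1 \<in> I" by (simp add: monomial_def)
        then show False using ideal_one[OF Iid] Iprop by blast
      qed
      define Std where "Std = {m. Poly_Mapping.keys m \<subseteq> {..<t} \<and> \<not> inG G m}"
      have bnd: "\<forall>i<t. Poly_Mapping.lookup m i < a i" if "m \<in> Std" for m
      proof (intro allI impI, rule ccontr)
        fix i assume i: "i < t" "\<not> Poly_Mapping.lookup m i < a i"
        then have "m = Poly_Mapping.single i (a i) + (m - Poly_Mapping.single i (a i))"
          using split_monom[of "a i" m i] by simp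
        then have "inG G m" using inS[OF i(1)] inG_mono by metis
        then show False using that by (simp add: Std_def)
      qed
      have lt: "tdeg m < N" if "m \<in> Std" for m
      proof -
        have mt: "Poly_Mapping.keys m \<subseteq> {..<t}" using that by (simp add: Std_def)
        have "m \<noteq> A" using that inA by (auto simp: Std_def)
        then obtain i where i: "i < t" "Poly_Mapping.lookup m i \<noteq> Poly_Mapping.lookup A i"
        proof -
          assume h: "\<And>i. i < t \<Longrightarrow> Poly_Mapping.lookup m i \<noteq> Poly_Mapping.lookup A i \<Longrightarrow> thesis"
          show thesis
          proof (rule ccontr)
            assume "\<not> thesis"
            then have "\<forall>i<t. Poly_Mapping.lookup m i = Poly_Mapping.lookup A i" using h by blast
            moreover have "\<forall>i. \<not> i < t \<longrightarrow> Poly_Mapping.lookup m i = 0" using mt by (auto simp: in_keys_iff)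
            ultimately have "m = A" by (intro poly_mapping_eqI) (auto simp: lA)
            then show False using \<open>m \<noteq> A\<close> by simp
          qed
        qed
        have "(\<Sum>i<t. Poly_Mapping.lookup m i) < (\<Sum>i<t. a i - 1)"
        proof (rule sum_strict_mono_ex1)
          show "\<forall>x\<in>{..<t}. Poly_Mapping.lookup m x \<le> a x - 1" using bnd[OF that] by fastforce
          show "\<exists>x\<in>{..<t}. Poly_Mapping.lookup m x < a x - 1" 
          proof
            show "i \<in> {..<t}" using i by simp
            have "Poly_Mapping.lookup m i \<noteq> a i - 1" using i by (simp add: lA)
            then show "Poly_Mapping.lookup m i < a i - 1" using bnd[OF that] i(1) by fastforce
          qed
        qed simp
        then show ?thesis using tdeg_sum[OF mt] by (simp add: N_def)
      qed
      have "0 \<in> Std" using n0 by (simp add: Std_def)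
      define D where "D = tdeg ` Std"
      have "D \<subseteq> {..<N}" using lt unfolding D_def by blast
      then have Dfin: "finite D" using finite_subset by blast
      have Dne: "D \<noteq> {}" using \<open>0 \<in> Std\<close> by (auto simp: D_def)
      obtain w where w: "w \<in> Std" "tdeg w = Max D"
        using Max_in[OF Dfin Dne] unfolding D_def by auto
      have wt: "Poly_Mapping.keys w \<subseteq> {..<t}" "\<not> inG G w" using w(1) by (auto simp: Std_def)
      have wi: "\<forall>i<t. inG G (w + Poly_Mapping.single i 1)"
      proof (intro allI impI, rule ccontr)
        fix i assume i: "i < t" "\<not> inG G (w + Poly_Mapping.single i 1)"
        have kt: "Poly_Mapping.keys (w + Poly_Mapping.single i 1) \<subseteq> {..<t}"
          using wt(1) i(1) by (simp add: keys_monom_add)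
        then have "w + Poly_Mapping.single i 1 \<in> Std" using i by (simp add: Std_def)
        then have "tdeg (w + Poly_Mapping.single i 1) \<le> Max D"
          using Dfin unfolding D_def by (simp add: Max_ge)
        moreover have "tdeg (w + Poly_Mapping.single i 1) = tdeg w + 1"
          using tdeg_sum[OF kt] tdeg_sum[OF wt(1)] i(1)
          by (simp add: lookup_add sum.distrib lookup_single when_def)
        ultimately show False using w(2) by simp
      qed
      have cw: "colon t I (monomial w) = maxid t"
        unfolding IG by (rule colon_maxid[OF G wt wi])
      have "maxid t \<in> Ass t I"
        unfolding Ass_def using maxid_prime cw monomial_polyring[OF wt(1)] by blast
      moreover have "monomial w \<in> homog t (tdeg w)"
        using wt(1) by (simp add: homog_def monomial_polyring)
      ultimately have "v_number t I \<le> tdeg w"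
        unfolding v_number_def using cw by (intro Least_le) blast
      then show False using lt[OF w(1)] vI by simp
    qed
  qed
qed

end
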